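(* Assume $\ell(y,x,\theta)\ge0$ for all $\theta$ and $\nu$-a.e. $(x,y)$, $L(\theta)<\infty$ for all $\theta$, and let $\pi$ be a prior on $\Theta$. Suppose $\lambda^\star>0$ is a local (or global) minimizer of $\lambda\mapsto\mathrm{EB}_0(\pi_J^\lambda,\lambda)$ on $(0,\infty)$, that this function is differentiable at $\lambda^\star$, and that its derivative may be computed by differentiating under the expectations $\mathbb{E}_{D\sim\nu^n}$, $\mathbb{E}_\pi$ and $\mathbb{E}_\nu$ (with all quantities below finite). Then, with $\rho^\star=\rho^\star_{\lambda^\star}$, $$\mathbb{E}_{D\sim\nu^n}\big[\mathcal{B}(\rho^\star(\cdot\mid D),\lambda^\star)\big]=\frac{1}{n}\mathbb{E}_{D\sim\nu^n}\big[\mathrm{KL}(\rho^\star(\cdot\mid D)\,\|\,\pi)\big].$$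
   Context: Let $\nu$ be a probability distribution on pairs $(x,y)$, $\Theta$ a parameter space, and for each $\theta\in\Theta$ let $p(y\mid x,\theta)>0$ be a conditional density; loss $\ell(y,x,\theta)=-\ln p(y\mid x,\theta)$, expected loss $L(\theta)=\mathbb{E}_\nu[\ell(y,x,\theta)]$. A sample $D=\{(x_i,y_i)\}_{i=1}^n\sim\nu^n$ is i.i.d.; $p(D\mid\theta)=\prod_{i=1}^n p(y_i\mid x_i,\theta)$. The cumulant generating function is $J_\theta(\lambda)=\ln\mathbb{E}_\nu[e^{\lambda(L(\theta)-\ell(y,x,\theta))}]$ with derivative $J_\theta'$. For a prior $\pi$ and $\lambda>0$: - Jensen prior: $\pi_J^\lambda(\theta)=\pi(\theta)e^{-nJ_\theta(\lambda)}/\mathbb{E}_\pi[e^{-nJ_\theta(\lambda)}]$; - posterior: $\rho^\star_\lambda(\theta\mid D)=p(D\mid\theta)^\lambda\pi_J^\lambda(\theta)/\mathbb{E}_{\pi_J^\lambda}[p(D\mid\theta)^\lambda]$; - $R_\lambda(\pi)=\ln\mathbb{E}_\pi[e^{nJ_\theta(\lambda)}]$; - $\mathrm{EB}_0(\pi,\lambda)=\frac{1}{\lambda n}\mathbb{E}_{D\sim\nu^n}\big[-\ln\mathbb{E}_\pi[p(D\mid\theta)^\lambda]\big]+\frac{1}{\lambda n}R_\lambda(\pi)$; - for a distribution $\rho$ on $\Theta$: $\mathcal{B}(\rho,\lambda)=\mathbb{E}_\rho\big[\lambda J_\theta'(\lambda)-J_\theta(\lambda)\big]$. *)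

theory Defs
  imports "HOL-Probability.Probability"
begin

text \<open>Setting: \<nu> is a probability measure on pairs z = (x,y); the parameter space is
  the space of the prior \<pi>; p y x \<theta> is the conditional density p(y|x,\<theta>).\<close>

definition loss :: "('y \<Rightarrow> 'x \<Rightarrow> 'a \<Rightarrow> real) \<Rightarrow> 'x \<times> 'y \<Rightarrow> 'a \<Rightarrow> real" where
  "loss p z \<theta> = - ln (p (snd z) (fst z) \<theta>)"

definition Lexp :: "('x \<times> 'y) measure \<Rightarrow> ('y \<Rightarrow> 'x \<Rightarrow> 'a \<Rightarrow> real) \<Rightarrow> 'a \<Rightarrow> real" where
  "Lexp \<nu> p \<theta> = (\<integral>z. loss p z \<theta> \<partial>\<nu>)"

definition cgf :: "('x \<times> 'y) measure \<Rightarrow> ('y \<Rightarrow> 'x \<Rightarrow> 'a \<Rightarrow> real) \<Rightarrow> 'a \<Rightarrow> real \<Rightarrow> real" where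
  "cgf \<nu> p \<theta> l = ln (\<integral>z. exp (l * (Lexp \<nu> p \<theta> - loss p z \<theta>)) \<partial>\<nu>)"

definition cgf' :: "('x \<times> 'y) measure \<Rightarrow> ('y \<Rightarrow> 'x \<Rightarrow> 'a \<Rightarrow> real) \<Rightarrow> 'a \<Rightarrow> real \<Rightarrow> real" where
  "cgf' \<nu> p \<theta> l = deriv (cgf \<nu> p \<theta>) l"

definition sample :: "('x \<times> 'y) measure \<Rightarrow> nat \<Rightarrow> (nat \<Rightarrow> 'x \<times> 'y) measure" where
  "sample \<nu> n = PiM {..<n} (\<lambda>_. \<nu>)"

definition lik :: "('y \<Rightarrow> 'x \<Rightarrow> 'a \<Rightarrow> real) \<Rightarrow> nat \<Rightarrow> (nat \<Rightarrow> 'x \<times> 'y) \<Rightarrow> 'a \<Rightarrow> real" where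
  "lik p n D \<theta> = (\<Prod>i<n. p (snd (D i)) (fst (D i)) \<theta>)"

definition jensen_prior :: "('x \<times> 'y) measure \<Rightarrow> ('y \<Rightarrow> 'x \<Rightarrow> 'a \<Rightarrow> real) \<Rightarrow> nat \<Rightarrow> 'a measure \<Rightarrow> real \<Rightarrow> 'a measure" where
  "jensen_prior \<nu> p n \<pi> l = density \<pi> (\<lambda>\<theta>. ennreal (exp (- real n * cgf \<nu> p \<theta> l) /
      (\<integral>\<theta>'. exp (- real n * cgf \<nu> p \<theta>' l) \<partial>\<pi>)))"

definition posterior :: "('x \<times> 'y) measure \<Rightarrow> ('y \<Rightarrow> 'x \<Rightarrow> 'a \<Rightarrow> real) \<Rightarrow> nat \<Rightarrow> 'a measure \<Rightarrow> real
    \<Rightarrow> (nat \<Rightarrow> 'x \<times> 'y) \<Rightarrow> 'a measure" where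
  "posterior \<nu> p n \<pi> l D = density (jensen_prior \<nu> p n \<pi> l) (\<lambda>\<theta>. ennreal (lik p n D \<theta> powr l /
      (\<integral>\<theta>'. lik p n D \<theta>' powr l \<partial>(jensen_prior \<nu> p n \<pi> l))))"

definition Rterm :: "('x \<times> 'y) measure \<Rightarrow> ('y \<Rightarrow> 'x \<Rightarrow> 'a \<Rightarrow> real) \<Rightarrow> nat \<Rightarrow> real \<Rightarrow> 'a measure \<Rightarrow> real" where
  "Rterm \<nu> p n l \<pi> = ln (\<integral>\<theta>. exp (real n * cgf \<nu> p \<theta> l) \<partial>\<pi>)"

definition EB0 :: "('x \<times> 'y) measure \<Rightarrow> ('y \<Rightarrow> 'x \<Rightarrow> 'a \<Rightarrow> real) \<Rightarrow> nat \<Rightarrow> 'a measure \<Rightarrow> real \<Rightarrow> real" where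
  "EB0 \<nu> p n \<pi> l =
     1 / (l * real n) * (\<integral>D. - ln (\<integral>\<theta>. lik p n D \<theta> powr l \<partial>\<pi>) \<partial>sample \<nu> n)
     + 1 / (l * real n) * Rterm \<nu> p n l \<pi>"

definition Bterm :: "('x \<times> 'y) measure \<Rightarrow> ('y \<Rightarrow> 'x \<Rightarrow> 'a \<Rightarrow> real) \<Rightarrow> 'a measure \<Rightarrow> real \<Rightarrow> real" where
  "Bterm \<nu> p \<rho> l = (\<integral>\<theta>. l * cgf' \<nu> p \<theta> l - cgf \<nu> p \<theta> l \<partial>\<rho>)"

text \<open>KL(\<rho> || \<pi>) with natural logarithm (library: KL_divergence b M N = E_N[log_b dN/dM]).\<close>
definition KL :: "'a measure \<Rightarrow> 'a measure \<Rightarrow> real" where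
  "KL \<rho> \<pi> = KL_divergence (exp 1) \<pi> \<rho>"

end

theory Submission
  imports Defs
begin

lemma int_pos:
  fixes f :: "'b \<Rightarrow> real"
  assumes "prob_space M" "integrable M f" "\<And>x. x \<in> space M \<Longrightarrow> 0 < f x"
  shows "0 < integral\<^sup>L M f"
proof -
  interpret prob_space M by fact
  have ge: "0 \<le> integral\<^sup>L M f" using assms by (intro integral_nonneg_AE) (auto intro!: less_imp_le)
  show ?thesis
  proof (rule ccontr)
    assume "\<not> 0 < integral\<^sup>L M f"
    then have "integral\<^sup>L M f = 0" using ge by simp
    then have "AE x in M. f x = 0" using assms
      by (subst (asm) integral_nonneg_eq_0_iff_AE) (auto intro!: less_imp_le)
    from this AE_space have "AE x in M. False" by eventually_elim (use assms(3) in fastforce)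
    then show False by (simp add: AE_False)
  qed
qed

lemma deriv_exp_lin: "deriv (\<lambda>l. exp (l * c)) x = c * exp (x * c)"
  by (rule DERIV_imp_deriv) (auto intro!: derivative_eq_intros)

theorem mainTheorem9:

  fixes \<nu> :: "('x \<times> 'y) measure" and \<pi> :: "'a measure"
    and p :: "'y \<Rightarrow> 'x \<Rightarrow> 'a \<Rightarrow> real" and n :: nat and lstar :: real
  assumes nu: "prob_space \<nu>" and pri: "prob_space \<pi>" and n_pos: "n > 0"
    and p_pos: "\<And>z \<theta>. z \<in> space \<nu> \<Longrightarrow> \<theta> \<in> space \<pi> \<Longrightarrow> p (snd z) (fst z) \<theta> > 0"
    and p_meas: "(\<lambda>(z, \<theta>). p (snd z) (fst z) \<theta>) \<in> borel_measurable (\<nu> \<Otimes>\<^sub>M \<pi>)"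
    and loss_nonneg: "\<And>\<theta>. \<theta> \<in> space \<pi> \<Longrightarrow> AE z in \<nu>. loss p z \<theta> \<ge> 0"
    and L_finite: "\<And>\<theta>. \<theta> \<in> space \<pi> \<Longrightarrow> integrable \<nu> (\<lambda>z. loss p z \<theta>)"
    and lstar_pos: "lstar > 0"
    and local_min: "\<exists>e>0. \<forall>l. l > 0 \<and> \<bar>l - lstar\<bar> < e \<longrightarrow>
                      EB0 \<nu> p n (jensen_prior \<nu> p n \<pi> lstar) lstar \<le> EB0 \<nu> p n (jensen_prior \<nu> p n \<pi> l) l"
    and differentiable: "(\<lambda>l. EB0 \<nu> p n (jensen_prior \<nu> p n \<pi> l) l) differentiable (at lstar)"
    \<comment> \<open>the derivative may be computed by differentiating under E_\<nu>\<close>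
    and diff_nu: "\<And>\<theta>. \<theta> \<in> space \<pi> \<Longrightarrow>
        integrable \<nu> (\<lambda>z. deriv (\<lambda>l. exp (l * (Lexp \<nu> p \<theta> - loss p z \<theta>))) lstar) \<and>
        ((\<lambda>l. \<integral>z. exp (l * (Lexp \<nu> p \<theta> - loss p z \<theta>)) \<partial>\<nu>) has_real_derivative
           (\<integral>z. deriv (\<lambda>l. exp (l * (Lexp \<nu> p \<theta> - loss p z \<theta>))) lstar \<partial>\<nu>)) (at lstar)"
    \<comment> \<open>... under E_\<pi> (expectations w.r.t. the Jensen prior written as E_\<pi> with its density)\<close>
    and diff_pi_num: "\<And>D. D \<in> space (sample \<nu> n) \<Longrightarrow>
        integrable \<pi> (\<lambda>\<theta>. deriv (\<lambda>l. lik p n D \<theta> powr l * exp (- real n * cgf \<nu> p \<theta> l)) lstar) \<and>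
        ((\<lambda>l. \<integral>\<theta>. lik p n D \<theta> powr l * exp (- real n * cgf \<nu> p \<theta> l) \<partial>\<pi>) has_real_derivative
           (\<integral>\<theta>. deriv (\<lambda>l. lik p n D \<theta> powr l * exp (- real n * cgf \<nu> p \<theta> l)) lstar \<partial>\<pi>)) (at lstar)"
    and diff_pi_den:
        "integrable \<pi> (\<lambda>\<theta>. deriv (\<lambda>l. exp (- real n * cgf \<nu> p \<theta> l)) lstar) \<and>
        ((\<lambda>l. \<integral>\<theta>. exp (- real n * cgf \<nu> p \<theta> l) \<partial>\<pi>) has_real_derivative
           (\<integral>\<theta>. deriv (\<lambda>l. exp (- real n * cgf \<nu> p \<theta> l)) lstar \<partial>\<pi>)) (at lstar)"
    \<comment> \<open>... and under E_{D ~ \<nu>^n}\<close>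
    and diff_D:
        "integrable (sample \<nu> n) (\<lambda>D. - ln (\<integral>\<theta>. lik p n D \<theta> powr lstar \<partial>jensen_prior \<nu> p n \<pi> lstar)) \<and>
         integrable (sample \<nu> n)
           (\<lambda>D. deriv (\<lambda>l. - ln (\<integral>\<theta>. lik p n D \<theta> powr l \<partial>jensen_prior \<nu> p n \<pi> l)) lstar) \<and>
        ((\<lambda>l. \<integral>D. - ln (\<integral>\<theta>. lik p n D \<theta> powr l \<partial>jensen_prior \<nu> p n \<pi> l) \<partial>sample \<nu> n)
           has_real_derivative
         (\<integral>D. deriv (\<lambda>l. - ln (\<integral>\<theta>. lik p n D \<theta> powr l \<partial>jensen_prior \<nu> p n \<pi> l)) lstar
            \<partial>sample \<nu> n)) (at lstar)"
    \<comment> \<open>all quantities in the conclusion are finite\<close>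
    and B_int_rho: "\<And>D. D \<in> space (sample \<nu> n) \<Longrightarrow>
        integrable (posterior \<nu> p n \<pi> lstar D) (\<lambda>\<theta>. lstar * cgf' \<nu> p \<theta> lstar - cgf \<nu> p \<theta> lstar)"
    and B_int_D: "integrable (sample \<nu> n) (\<lambda>D. Bterm \<nu> p (posterior \<nu> p n \<pi> lstar D) lstar)"
    and KL_int_rho: "\<And>D. D \<in> space (sample \<nu> n) \<Longrightarrow>
        integrable (posterior \<nu> p n \<pi> lstar D) (entropy_density (exp 1) \<pi> (posterior \<nu> p n \<pi> lstar D))"
    and KL_int_D: "integrable (sample \<nu> n) (\<lambda>D. KL (posterior \<nu> p n \<pi> lstar D) \<pi>)"
  shows "(\<integral>D. Bterm \<nu> p (posterior \<nu> p n \<pi> lstar D) lstar \<partial>sample \<nu> n)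
           = 1 / real n * (\<integral>D. KL (posterior \<nu> p n \<pi> lstar D) \<pi> \<partial>sample \<nu> n)"
proof -
  interpret nu: prob_space \<nu> by fact
  interpret pi: prob_space \<pi> by fact
  interpret pair_sigma_finite \<pi> \<nu> ..
  interpret nupi: pair_sigma_finite \<nu> \<pi> ..
  define s where "s = sample \<nu> n"
  have ps: "prob_space s" unfolding s_def sample_def by (intro prob_space_PiM nu)
  interpret s: prob_space s by fact
  have spaceD: "D i \<in> space \<nu>" if "D \<in> space s" "i < n" for D i
    using that unfolding s_def sample_def by (auto simp: space_PiM PiE_iff)
  have nn: "0 < real n" using n_pos by simp

  have m0[measurable]: "(\<lambda>x. p (snd (snd x)) (fst (snd x)) (fst x)) \<in> borel_measurable (\<pi> \<Otimes>\<^sub>M \<nu>)"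
    using measurable_compose[OF measurable_pair_swap' p_meas] by (simp add: case_prod_beta comp_def)
  have m1[measurable]: "(\<lambda>x. loss p (snd x) (fst x)) \<in> borel_measurable (\<pi> \<Otimes>\<^sub>M \<nu>)"
    unfolding loss_def by measurable
  have m0'[measurable]: "(\<lambda>x. p (snd (fst x)) (fst (fst x)) (snd x)) \<in> borel_measurable (\<nu> \<Otimes>\<^sub>M \<pi>)"
    using p_meas by (simp add: case_prod_beta)
  have m1'[measurable]: "(\<lambda>x. loss p (fst x) (snd x)) \<in> borel_measurable (\<nu> \<Otimes>\<^sub>M \<pi>)"
    unfolding loss_def by measurable
  have m2[measurable]: "Lexp \<nu> p \<in> borel_measurable \<pi>"
    unfolding Lexp_def by (rule nu.borel_measurable_lebesgue_integral) (simp add: case_prod_beta m1)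
  have mM[measurable]: "(\<lambda>\<theta>. \<integral>z. exp (l * (Lexp \<nu> p \<theta> - loss p z \<theta>)) \<partial>\<nu>) \<in> borel_measurable \<pi>" for l
    by (rule nu.borel_measurable_lebesgue_integral) (simp add: case_prod_beta)
  have mcgf[measurable]: "(\<lambda>\<theta>. cgf \<nu> p \<theta> l) \<in> borel_measurable \<pi>" for l
    unfolding cgf_def by measurable
  define Md where "Md \<theta> = (\<integral>z. (Lexp \<nu> p \<theta> - loss p z \<theta>) * exp (lstar * (Lexp \<nu> p \<theta> - loss p z \<theta>)) \<partial>\<nu>)" for \<theta>
  have mMd[measurable]: "Md \<in> borel_measurable \<pi>"
    unfolding Md_def by (rule nu.borel_measurable_lebesgue_integral) (simp add: case_prod_beta)
  have mloss: "(\<lambda>z. loss p z \<theta>) \<in> borel_measurable \<nu>" if "\<theta> \<in> space \<pi>" for \<theta>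
    using measurable_Pair2[OF m1 that] by simp
  have mlik[measurable]: "(\<lambda>\<theta>. lik p n D \<theta>) \<in> borel_measurable \<pi>" if "D \<in> space s" for D
  proof -
    have "(\<lambda>\<theta>. p (snd (D i)) (fst (D i)) \<theta>) \<in> borel_measurable \<pi>" if "i < n" for i
      using measurable_Pair2[OF p_meas spaceD[OF \<open>D\<in>space s\<close> that]] by simp
    then show ?thesis unfolding lik_def by (intro borel_measurable_prod) auto
  qed

  have intexp: "integrable \<nu> (\<lambda>z. exp (l * (Lexp \<nu> p \<theta> - loss p z \<theta>)))" if "\<theta> \<in> space \<pi>" "0 \<le> l" for \<theta> l
  proof (rule Bochner_Integration.integrable_bound[OF nu.integrable_const[of "exp (l * Lexp \<nu> p \<theta>)"]])
    show "(\<lambda>z. exp (l * (Lexp \<nu> p \<theta> - loss p z \<theta>))) \<in> borel_measurable \<nu>"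
      using mloss[OF that(1)] by measurable
    show "AE z in \<nu>. norm (exp (l * (Lexp \<nu> p \<theta> - loss p z \<theta>))) \<le> norm (exp (l * Lexp \<nu> p \<theta>))"
      using loss_nonneg[OF that(1)]
    proof eventually_elim
      case (elim z)
      have "l * (Lexp \<nu> p \<theta> - loss p z \<theta>) \<le> l * Lexp \<nu> p \<theta>"
        using elim that(2) by (simp add: right_diff_distrib mult_nonneg_nonneg)
      then show ?case by simp
    qed
  qed
  have Mge1: "1 \<le> (\<integral>z. exp (l * (Lexp \<nu> p \<theta> - loss p z \<theta>)) \<partial>\<nu>)" if "\<theta> \<in> space \<pi>" "0 \<le> l" for \<theta> l
  proof -
    have iL: "integrable \<nu> (\<lambda>z. loss p z \<theta>)" by (rule L_finite[OF that(1)])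
    have i1: "integrable \<nu> (\<lambda>z. 1 + l * (Lexp \<nu> p \<theta> - loss p z \<theta>))"
      using iL by auto
    have "(\<integral>z. 1 + l * (Lexp \<nu> p \<theta> - loss p z \<theta>) \<partial>\<nu>) = 1"
      using iL by (simp add: Lexp_def nu.prob_space)
    moreover have "(\<integral>z. 1 + l * (Lexp \<nu> p \<theta> - loss p z \<theta>) \<partial>\<nu>) \<le> (\<integral>z. exp (l * (Lexp \<nu> p \<theta> - loss p z \<theta>)) \<partial>\<nu>)"
      by (intro integral_mono i1 intexp that) simp
    ultimately show ?thesis by simp
  qed
  have cgf_nn: "0 \<le> cgf \<nu> p \<theta> l" if "\<theta> \<in> space \<pi>" "0 \<le> l" for \<theta> l
    unfolding cgf_def using Mge1[OF that] by simp
  have e_le1: "exp (- real n * cgf \<nu> p \<theta> l) \<le> 1" if "\<theta> \<in> space \<pi>" "0 \<le> l" for \<theta> l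
    using cgf_nn[OF that] by simp
  define Z where "Z l = (\<integral>\<theta>. exp (- real n * cgf \<nu> p \<theta> l) \<partial>\<pi>)" for l
  have intZ: "integrable \<pi> (\<lambda>\<theta>. exp (- real n * cgf \<nu> p \<theta> l))" if "0 \<le> l" for l
    by (rule Bochner_Integration.integrable_bound[OF pi.integrable_const[of "1::real"]]) (use e_le1 that in auto)
  have Zpos: "0 < Z l" if "0 \<le> l" for l
    unfolding Z_def by (rule int_pos[OF pri intZ[OF that]]) simp
  have Znn: "0 \<le> Z l" for l unfolding Z_def by (rule integral_nonneg_AE) simp
  define M where "M \<theta> = (\<integral>z. exp (lstar * (Lexp \<nu> p \<theta> - loss p z \<theta>)) \<partial>\<nu>)" for \<theta>
  have Mpos: "0 < M \<theta>" if "\<theta> \<in> space \<pi>" for \<theta>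
    using Mge1[OF that, of lstar] lstar_pos by (simp add: M_def)
  have Mder: "((\<lambda>l. \<integral>z. exp (l * (Lexp \<nu> p \<theta> - loss p z \<theta>)) \<partial>\<nu>) has_real_derivative Md \<theta>) (at lstar)"
    if "\<theta> \<in> space \<pi>" for \<theta>
    using diff_nu[OF that] by (simp add: deriv_exp_lin Md_def)
  have cgf_der: "(cgf \<nu> p \<theta> has_real_derivative Md \<theta> / M \<theta>) (at lstar)" if "\<theta> \<in> space \<pi>" for \<theta>
  proof -
    have "cgf \<nu> p \<theta> = (\<lambda>l. ln (\<integral>z. exp (l * (Lexp \<nu> p \<theta> - loss p z \<theta>)) \<partial>\<nu>))"
      by (auto simp: cgf_def fun_eq_iff)
    moreover have "((\<lambda>l. ln (\<integral>z. exp (l * (Lexp \<nu> p \<theta> - loss p z \<theta>)) \<partial>\<nu>)) has_real_derivative (1 / M \<theta> * Md \<theta>)) (at lstar)"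
      using DERIV_chain2[OF DERIV_ln_divide Mder[OF that]] Mpos[OF that] by (simp add: M_def)
    ultimately show ?thesis by simp
  qed
  have cgf'_eq: "cgf' \<nu> p \<theta> lstar = Md \<theta> / M \<theta>" if "\<theta> \<in> space \<pi>" for \<theta>
    unfolding cgf'_def by (rule DERIV_imp_deriv[OF cgf_der[OF that]])
  have mM'[measurable]: "M \<in> borel_measurable \<pi>" unfolding M_def[abs_def] by measurable
  have mcgf'[measurable]: "(\<lambda>\<theta>. cgf' \<nu> p \<theta> lstar) \<in> borel_measurable \<pi>"
    by (rule measurable_cong[THEN iffD2, of _ _ "\<lambda>\<theta>. Md \<theta> / M \<theta>"]) (auto simp: cgf'_eq)
  have e_der: "((\<lambda>l. exp (- real n * cgf \<nu> p \<theta> l)) has_real_derivative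
        exp (- real n * cgf \<nu> p \<theta> lstar) * (- real n * cgf' \<nu> p \<theta> lstar)) (at lstar)" if "\<theta> \<in> space \<pi>" for \<theta>
    using cgf_der[OF that] cgf'_eq[OF that] by (auto intro!: derivative_eq_intros)
  have lik_pos: "0 < lik p n D \<theta>" if "D \<in> space s" "\<theta> \<in> space \<pi>" for D \<theta>
    unfolding lik_def by (intro prod_pos) (auto intro: p_pos spaceD that)
  have num_der: "((\<lambda>l. lik p n D \<theta> powr l * exp (- real n * cgf \<nu> p \<theta> l)) has_real_derivative
       lik p n D \<theta> powr lstar * exp (- real n * cgf \<nu> p \<theta> lstar) * (ln (lik p n D \<theta>) - real n * cgf' \<nu> p \<theta> lstar)) (at lstar)"
    if "D \<in> space s" "\<theta> \<in> space \<pi>" for D \<theta>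
  proof -
    have eq: "(\<lambda>l. lik p n D \<theta> powr l * exp (- real n * cgf \<nu> p \<theta> l)) = (\<lambda>l. exp (l * ln (lik p n D \<theta>)) * exp (- real n * cgf \<nu> p \<theta> l))"
      using lik_pos[OF that] by (simp add: powr_def)
    have d1: "((\<lambda>l. exp (l * ln (lik p n D \<theta>))) has_real_derivative exp (lstar * ln (lik p n D \<theta>)) * ln (lik p n D \<theta>)) (at lstar)"
      by (auto intro!: derivative_eq_intros)
    show ?thesis unfolding eq
      by (rule DERIV_cong[OF DERIV_mult[OF d1 e_der[OF that(2)]]])
         (use lik_pos[OF that] in \<open>simp add: powr_def algebra_simps\<close>)
  qed

  define N where "N D l = (\<integral>\<theta>. lik p n D \<theta> powr l * exp (- real n * cgf \<nu> p \<theta> l) \<partial>\<pi>)" for D l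
  define Nd where "Nd D = (\<integral>\<theta>. lik p n D \<theta> powr lstar * exp (- real n * cgf \<nu> p \<theta> lstar) *
      (ln (lik p n D \<theta>) - real n * cgf' \<nu> p \<theta> lstar) \<partial>\<pi>)" for D
  have N_der: "(N D has_real_derivative Nd D) (at lstar)" if "D \<in> space s" for D
  proof -
    have "(\<integral>\<theta>. deriv (\<lambda>l. lik p n D \<theta> powr l * exp (- real n * cgf \<nu> p \<theta> l)) lstar \<partial>\<pi>) = Nd D"
      unfolding Nd_def by (rule Bochner_Integration.integral_cong[OF refl], rule DERIV_imp_deriv, rule num_der[OF that])
    with diff_pi_num[of D] that show ?thesis by (simp add: N_def[abs_def] s_def)
  qed
  have intNd: "integrable \<pi> (\<lambda>\<theta>. lik p n D \<theta> powr lstar * exp (- real n * cgf \<nu> p \<theta> lstar) *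
      (ln (lik p n D \<theta>) - real n * cgf' \<nu> p \<theta> lstar))" if "D \<in> space s" for D
  proof -
    have "integrable \<pi> (\<lambda>\<theta>. deriv (\<lambda>l. lik p n D \<theta> powr l * exp (- real n * cgf \<nu> p \<theta> l)) lstar)"
      using diff_pi_num[of D] that by (simp add: s_def)
    moreover have "integrable \<pi> (\<lambda>\<theta>. deriv (\<lambda>l. lik p n D \<theta> powr l * exp (- real n * cgf \<nu> p \<theta> l)) lstar)
      \<longleftrightarrow> integrable \<pi> (\<lambda>\<theta>. lik p n D \<theta> powr lstar * exp (- real n * cgf \<nu> p \<theta> lstar) *
      (ln (lik p n D \<theta>) - real n * cgf' \<nu> p \<theta> lstar))"
      by (rule Bochner_Integration.integrable_cong[OF refl], rule DERIV_imp_deriv, rule num_der[OF that])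
    ultimately show ?thesis by simp
  qed
  define Zd where "Zd = (\<integral>\<theta>. deriv (\<lambda>l. exp (- real n * cgf \<nu> p \<theta> l)) lstar \<partial>\<pi>)"
  have Z_der: "(Z has_real_derivative Zd) (at lstar)"
    using diff_pi_den by (simp add: Z_def[abs_def] Zd_def)
  have jp: "jensen_prior \<nu> p n \<pi> l = density \<pi> (\<lambda>\<theta>. ennreal (exp (- real n * cgf \<nu> p \<theta> l) / Z l))" for l
    unfolding jensen_prior_def Z_def ..
  have Q_eq: "(\<integral>\<theta>. lik p n D \<theta> powr l \<partial>jensen_prior \<nu> p n \<pi> l) = N D l / Z l" if "D \<in> space s" for D l
  proof -
    have [measurable]: "(\<lambda>\<theta>. lik p n D \<theta>) \<in> borel_measurable \<pi>" using mlik[OF that] .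
    have "(\<integral>\<theta>. lik p n D \<theta> powr l \<partial>jensen_prior \<nu> p n \<pi> l)
        = (\<integral>\<theta>. (exp (- real n * cgf \<nu> p \<theta> l) / Z l) *\<^sub>R lik p n D \<theta> powr l \<partial>\<pi>)"
      unfolding jp by (rule integral_density) (auto simp: Znn)
    also have "\<dots> = (\<integral>\<theta>. (lik p n D \<theta> powr l * exp (- real n * cgf \<nu> p \<theta> l)) / Z l \<partial>\<pi>)"
      by (simp add: mult.commute)
    also have "\<dots> = N D l / Z l" by (simp add: N_def)
    finally show ?thesis .
  qed
  have R_eq: "Rterm \<nu> p n l (jensen_prior \<nu> p n \<pi> l) = - ln (Z l)" for l
  proof -
    have "(\<integral>\<theta>. exp (real n * cgf \<nu> p \<theta> l) \<partial>jensen_prior \<nu> p n \<pi> l)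
        = (\<integral>\<theta>. (exp (- real n * cgf \<nu> p \<theta> l) / Z l) *\<^sub>R exp (real n * cgf \<nu> p \<theta> l) \<partial>\<pi>)"
      unfolding jp by (rule integral_density) (auto simp: Znn)
    also have "\<dots> = (\<integral>\<theta>. 1 / Z l \<partial>\<pi>)"
      by (rule Bochner_Integration.integral_cong) (simp_all add: exp_minus field_simps)
    also have "\<dots> = 1 / Z l" by (simp add: pi.prob_space)
    finally show ?thesis unfolding Rterm_def by (simp add: ln_div)
  qed
  define H where "H l = (\<integral>D. - ln (\<integral>\<theta>. lik p n D \<theta> powr l \<partial>jensen_prior \<nu> p n \<pi> l) \<partial>s)" for l
  define Hd where "Hd = (\<integral>D. deriv (\<lambda>l. - ln (\<integral>\<theta>. lik p n D \<theta> powr l \<partial>jensen_prior \<nu> p n \<pi> l)) lstar \<partial>s)"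
  have H_der: "(H has_real_derivative Hd) (at lstar)"
    using diff_D by (simp add: H_def[abs_def] Hd_def s_def)
  have f_eq: "(\<lambda>l. EB0 \<nu> p n (jensen_prior \<nu> p n \<pi> l) l) = (\<lambda>l. (H l - ln (Z l)) / (l * real n))"
  proof -
    have "EB0 \<nu> p n (jensen_prior \<nu> p n \<pi> l) l = 1 / (l * real n) * (H l - ln (Z l))" for l
      by (simp add: EB0_def H_def s_def R_eq right_diff_distrib)
    then show ?thesis by (simp add: fun_eq_iff)
  qed
  have lnZ_der: "((\<lambda>l. ln (Z l)) has_real_derivative (1 / Z lstar * Zd)) (at lstar)"
    by (rule DERIV_chain2[OF DERIV_ln_divide[OF Zpos] Z_der]) (use lstar_pos in simp)
  have f_der: "((\<lambda>l. EB0 \<nu> p n (jensen_prior \<nu> p n \<pi> l) l) has_real_derivative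
     ((Hd - 1 / Z lstar * Zd) * (lstar * real n) - (H lstar - ln (Z lstar)) * (1 * real n)) / ((lstar * real n) * (lstar * real n))) (at lstar)"
    unfolding f_eq
    by (rule DERIV_divide[OF DERIV_diff[OF H_der lnZ_der]]) (use lstar_pos n_pos in \<open>auto intro!: derivative_eq_intros\<close>)
  have stat: "(Hd - Zd / Z lstar) * lstar = H lstar - ln (Z lstar)"
  proof -
    obtain e where e: "e > 0" "\<forall>l. l > 0 \<and> \<bar>l - lstar\<bar> < e \<longrightarrow>
        EB0 \<nu> p n (jensen_prior \<nu> p n \<pi> lstar) lstar \<le> EB0 \<nu> p n (jensen_prior \<nu> p n \<pi> l) l"
      using local_min by blast
    have "((Hd - 1 / Z lstar * Zd) * (lstar * real n) - (H lstar - ln (Z lstar)) * (1 * real n)) / ((lstar * real n) * (lstar * real n)) = 0"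
    proof (rule DERIV_local_min[OF f_der, of "min e lstar"])
      show "0 < min e lstar" using e lstar_pos by simp
      show "\<forall>y. \<bar>lstar - y\<bar> < min e lstar \<longrightarrow>
         EB0 \<nu> p n (jensen_prior \<nu> p n \<pi> lstar) lstar \<le> EB0 \<nu> p n (jensen_prior \<nu> p n \<pi> y) y"
        using e(2) by (auto simp: abs_if split: if_splits)
    qed
    then have "real n * ((Hd - Zd / Z lstar) * lstar) = real n * (H lstar - ln (Z lstar))"
      using nn lstar_pos Zpos[of lstar] by (simp add: field_simps)
    then show ?thesis using nn by simp
  qed

  have AEnu: "AE z in \<nu>. AE \<theta> in \<pi>. 0 \<le> loss p z \<theta>"
  proof -
    have "AE \<theta> in \<pi>. AE z in \<nu>. 0 \<le> loss p z \<theta>" using loss_nonneg by (rule AE_I2)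
    moreover have "{x \<in> space (\<nu> \<Otimes>\<^sub>M \<pi>). 0 \<le> loss p (fst x) (snd x)} \<in> sets (\<nu> \<Otimes>\<^sub>M \<pi>)" by measurable
    ultimately show ?thesis using nupi.AE_commute[of "\<lambda>z \<theta>. 0 \<le> loss p z \<theta>"] by simp
  qed
  have AEs: "AE D in s. AE \<theta> in \<pi>. \<forall>i<n. 0 \<le> loss p (D i) \<theta>"
  proof -
    have "AE D in s. \<forall>i\<in>{..<n}. AE \<theta> in \<pi>. 0 \<le> loss p (D i) \<theta>"
      unfolding s_def sample_def
      by (rule AE_finite_allI) (auto intro!: AE_PiM_component[where P="\<lambda>z. AE \<theta> in \<pi>. 0 \<le> loss p z \<theta>"] nu AEnu)
    then show ?thesis
    proof eventually_elim
      case (elim D)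
      have "AE \<theta> in \<pi>. \<forall>i\<in>{..<n}. 0 \<le> loss p (D i) \<theta>" using elim by (intro AE_finite_allI) auto
      then show ?case by eventually_elim auto
    qed
  qed
  define mQ where "mQ D = - ln (\<integral>\<theta>. lik p n D \<theta> powr lstar \<partial>jensen_prior \<nu> p n \<pi> lstar)" for D
  define dQ where "dQ D = deriv (\<lambda>l. - ln (\<integral>\<theta>. lik p n D \<theta> powr l \<partial>jensen_prior \<nu> p n \<pi> l)) lstar" for D
  define c where "c = ln (Z lstar) - lstar * (Zd / Z lstar)"
  have Zs: "0 < Z lstar" using Zpos lstar_pos by simp
  have perD: "real n * Bterm \<nu> p (posterior \<nu> p n \<pi> lstar D) lstar - KL (posterior \<nu> p n \<pi> lstar D) \<pi>
       = lstar * dQ D - mQ D + c"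
    if D: "D \<in> space s" and good: "AE \<theta> in \<pi>. \<forall>i<n. 0 \<le> loss p (D i) \<theta>" for D
  proof -
    have [measurable]: "(\<lambda>\<theta>. lik p n D \<theta>) \<in> borel_measurable \<pi>" using mlik[OF D] .
    define e where "e \<theta> = exp (- real n * cgf \<nu> p \<theta> lstar)" for \<theta>
    have [measurable]: "e \<in> borel_measurable \<pi>" unfolding e_def[abs_def] by measurable
    have e_pos: "0 < e \<theta>" for \<theta> by (simp add: e_def)
    have e1: "e \<theta> \<le> 1" if "\<theta> \<in> space \<pi>" for \<theta> using e_le1[OF that, of lstar] lstar_pos by (simp add: e_def)
    have lik1: "AE \<theta> in \<pi>. lik p n D \<theta> \<le> 1"
      using good AE_space
    proof eventually_elim
      case (elim \<theta>)
      show ?case unfolding lik_def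
      proof (rule prod_le_1)
        fix i assume "i \<in> {..<n}"
        then have i: "i < n" by simp
        have pp: "0 < p (snd (D i)) (fst (D i)) \<theta>" using p_pos[OF spaceD[OF D i]] elim(2) by simp
        have "0 \<le> loss p (D i) \<theta>" using elim(1) i by simp
        then have "ln (p (snd (D i)) (fst (D i)) \<theta>) \<le> 0" by (simp add: loss_def)
        then show "0 \<le> p (snd (D i)) (fst (D i)) \<theta> \<and> p (snd (D i)) (fst (D i)) \<theta> \<le> 1" using pp by simp
      qed
    qed
    define g where "g \<theta> = lik p n D \<theta> powr lstar * e \<theta>" for \<theta>
    have [measurable]: "g \<in> borel_measurable \<pi>" unfolding g_def[abs_def] by measurable
    have g_pos: "0 < g \<theta>" if "\<theta> \<in> space \<pi>" for \<theta> using lik_pos[OF D that] e_pos by (simp add: g_def)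
    have int_g: "integrable \<pi> g"
    proof (rule Bochner_Integration.integrable_bound[OF pi.integrable_const[of "1::real"]])
      show "g \<in> borel_measurable \<pi>" by measurable
      show "AE \<theta> in \<pi>. norm (g \<theta>) \<le> norm (1::real)" using lik1 AE_space
      proof eventually_elim
        case (elim \<theta>)
        have "lik p n D \<theta> powr lstar \<le> 1 powr lstar"
          using lik_pos[OF D elim(2)] elim(1) lstar_pos by (intro powr_mono2) auto
        then have "lik p n D \<theta> powr lstar \<le> 1" by simp
        then have "g \<theta> \<le> 1" unfolding g_def by (rule mult_le_one) (use e_pos[of \<theta>] e1[OF elim(2)] in auto)
        then show ?case using g_pos[OF elim(2)] by simp
      qed
    qed
    define NN where "NN = N D lstar"
    have NN_eq: "NN = integral\<^sup>L \<pi> g" by (simp add: NN_def N_def g_def[abs_def] e_def)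
    have NNpos: "0 < NN" unfolding NN_eq by (rule int_pos[OF pri int_g g_pos])
    define w where "w \<theta> = g \<theta> / NN" for \<theta>
    have [measurable]: "w \<in> borel_measurable \<pi>" unfolding w_def[abs_def] by measurable
    have w_pos: "0 < w \<theta>" if "\<theta> \<in> space \<pi>" for \<theta> using g_pos[OF that] NNpos by (simp add: w_def)
    have w_nn: "AE \<theta> in \<pi>. 0 \<le> w \<theta>" using w_pos by (intro AE_I2) (simp add: less_imp_le)
    have post: "posterior \<nu> p n \<pi> lstar D = density \<pi> (\<lambda>\<theta>. ennreal (w \<theta>))"
    proof -
      have "posterior \<nu> p n \<pi> lstar D = density (jensen_prior \<nu> p n \<pi> lstar)
          (\<lambda>\<theta>. ennreal (lik p n D \<theta> powr lstar / (N D lstar / Z lstar)))"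
        unfolding posterior_def using Q_eq[OF D, of lstar] by simp
      also have "\<dots> = density \<pi> (\<lambda>\<theta>. ennreal (exp (- real n * cgf \<nu> p \<theta> lstar) / Z lstar) *
          ennreal (lik p n D \<theta> powr lstar / (N D lstar / Z lstar)))"
        unfolding jp by (rule density_density_eq) measurable
      also have "\<dots> = density \<pi> (\<lambda>\<theta>. ennreal (w \<theta>))"
      proof (rule density_cong)
        show "(\<lambda>\<theta>. ennreal (exp (- real n * cgf \<nu> p \<theta> lstar) / Z lstar) *
          ennreal (lik p n D \<theta> powr lstar / (N D lstar / Z lstar))) \<in> borel_measurable \<pi>" by measurable
        show "(\<lambda>\<theta>. ennreal (w \<theta>)) \<in> borel_measurable \<pi>" by measurable
        show "AE \<theta> in \<pi>. ennreal (exp (- real n * cgf \<nu> p \<theta> lstar) / Z lstar) *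
          ennreal (lik p n D \<theta> powr lstar / (N D lstar / Z lstar)) = ennreal (w \<theta>)"
        proof (rule AE_I2)
          fix \<theta>
          have "exp (- real n * cgf \<nu> p \<theta> lstar) / Z lstar * (lik p n D \<theta> powr lstar / (N D lstar / Z lstar)) = w \<theta>"
            using Zs NNpos by (simp add: w_def g_def e_def NN_def field_simps)
          moreover have "0 \<le> exp (- real n * cgf \<nu> p \<theta> lstar) / Z lstar" using Zs by simp
          ultimately show "ennreal (exp (- real n * cgf \<nu> p \<theta> lstar) / Z lstar) *
            ennreal (lik p n D \<theta> powr lstar / (N D lstar / Z lstar)) = ennreal (w \<theta>)"
            by (simp add: ennreal_mult'[symmetric])
        qed
      qed
      finally show ?thesis .
    qed
    have int_w: "integrable \<pi> w" unfolding w_def[abs_def] using int_g by simp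
    have w_int1: "integral\<^sup>L \<pi> w = 1" unfolding w_def[abs_def] using NNpos by (simp add: NN_eq)
    define A where "A \<theta> = lstar * cgf' \<nu> p \<theta> lstar - cgf \<nu> p \<theta> lstar" for \<theta>
    have [measurable]: "A \<in> borel_measurable \<pi>" unfolding A_def[abs_def] by measurable
    have Bt: "Bterm \<nu> p (posterior \<nu> p n \<pi> lstar D) lstar = (\<integral>\<theta>. w \<theta> * A \<theta> \<partial>\<pi>)"
    proof -
      have "Bterm \<nu> p (posterior \<nu> p n \<pi> lstar D) lstar = (\<integral>\<theta>. A \<theta> \<partial>density \<pi> (\<lambda>\<theta>. ennreal (w \<theta>)))"
        by (simp add: Bterm_def A_def post)
      also have "\<dots> = (\<integral>\<theta>. w \<theta> *\<^sub>R A \<theta> \<partial>\<pi>)" by (rule integral_density) (auto simp: w_nn)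
      finally show ?thesis by simp
    qed
    have intA: "integrable \<pi> (\<lambda>\<theta>. w \<theta> * A \<theta>)"
    proof -
      have "integrable (density \<pi> (\<lambda>\<theta>. ennreal (w \<theta>))) A"
        using B_int_rho[of D] D by (simp add: s_def A_def[abs_def] post)
      then show ?thesis by (subst (asm) integrable_density) (auto simp: w_nn)
    qed
    have Kt: "KL (posterior \<nu> p n \<pi> lstar D) \<pi> = (\<integral>\<theta>. w \<theta> * ln (w \<theta>) \<partial>\<pi>)"
      unfolding KL_def post by (subst pi.KL_density) (auto simp: w_nn log_def)
    define E where "E \<theta> = w \<theta> * (ln (lik p n D \<theta>) - real n * cgf' \<nu> p \<theta> lstar)" for \<theta>
    have intE: "integrable \<pi> E"
    proof -
      have "integrable \<pi> (\<lambda>\<theta>. lik p n D \<theta> powr lstar * exp (- real n * cgf \<nu> p \<theta> lstar) *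
        (ln (lik p n D \<theta>) - real n * cgf' \<nu> p \<theta> lstar) / NN)" using intNd[OF D] by simp
      then show ?thesis by (simp add: E_def[abs_def] w_def g_def e_def)
    qed
    have intE_val: "integral\<^sup>L \<pi> E = Nd D / NN"
      by (simp add: E_def[abs_def] w_def g_def e_def Nd_def)
    have ident: "w \<theta> * ln (w \<theta>) = lstar * E \<theta> + real n * (w \<theta> * A \<theta>) - ln NN * w \<theta>" if "\<theta> \<in> space \<pi>" for \<theta>
    proof -
      have "ln (w \<theta>) = lstar * ln (lik p n D \<theta>) - real n * cgf \<nu> p \<theta> lstar - ln NN"
        using lik_pos[OF D that] NNpos e_pos[of \<theta>]
        by (simp add: w_def g_def e_def ln_div ln_mult)
      then have "w \<theta> * ln (w \<theta>) = w \<theta> * (lstar * ln (lik p n D \<theta>) - real n * cgf \<nu> p \<theta> lstar - ln NN)"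
        by simp
      then show ?thesis by (simp add: E_def A_def algebra_simps)
    qed
    have "(\<integral>\<theta>. w \<theta> * ln (w \<theta>) \<partial>\<pi>) = (\<integral>\<theta>. lstar * E \<theta> + real n * (w \<theta> * A \<theta>) - ln NN * w \<theta> \<partial>\<pi>)"
      by (rule Bochner_Integration.integral_cong[OF refl ident])
    also have "\<dots> = lstar * (Nd D / NN) + real n * (\<integral>\<theta>. w \<theta> * A \<theta> \<partial>\<pi>) - ln NN"
      using intE intA int_w by (simp add: intE_val w_int1)
    finally have KL_val: "KL (posterior \<nu> p n \<pi> lstar D) \<pi> = lstar * (Nd D / NN) + real n * (\<integral>\<theta>. w \<theta> * A \<theta> \<partial>\<pi>) - ln NN"
      using Kt by simp
    have mQv: "mQ D = - ln NN + ln (Z lstar)"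
      using Q_eq[OF D, of lstar] NNpos Zs by (simp add: mQ_def NN_def ln_div)
    have dQv: "dQ D = Zd / Z lstar - Nd D / NN"
    proof -
      have feq: "(\<lambda>l. - ln (\<integral>\<theta>. lik p n D \<theta> powr l \<partial>jensen_prior \<nu> p n \<pi> l)) = (\<lambda>l. - ln (N D l / Z l))"
        using Q_eq[OF D] by simp
      have "((\<lambda>l. - ln (N D l / Z l)) has_real_derivative
          - (1 / (N D lstar / Z lstar) * ((Nd D * Z lstar - N D lstar * Zd) / (Z lstar * Z lstar)))) (at lstar)"
        by (rule DERIV_minus, rule DERIV_chain2[OF DERIV_ln_divide DERIV_divide[OF N_der[OF D] Z_der]])
           (use NNpos Zs in \<open>simp_all add: NN_def\<close>)
      then have "dQ D = - (1 / (N D lstar / Z lstar) * ((Nd D * Z lstar - N D lstar * Zd) / (Z lstar * Z lstar)))"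
        unfolding dQ_def feq by (rule DERIV_imp_deriv)
      also have "\<dots> = Zd / Z lstar - Nd D / NN"
        using NNpos Zs by (simp add: NN_def field_simps)
      finally show ?thesis .
    qed
    show ?thesis
      by (simp add: Bt KL_val mQv dQv c_def algebra_simps)
  qed
  have AEid: "AE D in s. real n * Bterm \<nu> p (posterior \<nu> p n \<pi> lstar D) lstar - KL (posterior \<nu> p n \<pi> lstar D) \<pi>
       = lstar * dQ D - mQ D + c"
    using AEs AE_space by eventually_elim (rule perD)
  have intm: "integrable s mQ" using diff_D by (simp add: s_def mQ_def[abs_def])
  have intd: "integrable s dQ" using diff_D by (simp add: s_def dQ_def[abs_def])
  have intB: "integrable s (\<lambda>D. Bterm \<nu> p (posterior \<nu> p n \<pi> lstar D) lstar)" using B_int_D by (simp add: s_def)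
  have intK: "integrable s (\<lambda>D. KL (posterior \<nu> p n \<pi> lstar D) \<pi>)" using KL_int_D by (simp add: s_def)
  have "(\<integral>D. real n * Bterm \<nu> p (posterior \<nu> p n \<pi> lstar D) lstar - KL (posterior \<nu> p n \<pi> lstar D) \<pi> \<partial>s)
      = (\<integral>D. lstar * dQ D - mQ D + c \<partial>s)"
    by (rule integral_cong_AE[OF _ _ AEid]) (use intm intd intB intK in auto)
  also have "\<dots> = lstar * Hd - H lstar + c"
    using intm intd by (simp add: Hd_def H_def dQ_def[symmetric] mQ_def[symmetric] s.prob_space)
  also have "\<dots> = 0" using stat by (simp add: c_def algebra_simps)
  finally have "real n * (\<integral>D. Bterm \<nu> p (posterior \<nu> p n \<pi> lstar D) lstar \<partial>s) - (\<integral>D. KL (posterior \<nu> p n \<pi> lstar D) \<pi> \<partial>s) = 0"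
    using intB intK by simp
  then show ?thesis using nn by (simp add: s_def field_simps)
qed
end
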